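(* Let $\rho_r\in(0,1)$, and let $R>\lambda>\rho_r$ be constants. Let $C\subseteq\{0,1\}^n$ consist of $2^{Rn}$ independent uniformly random vectors, partitioned into $2^{R'n}$ blocks $A_s$ ($s\in\{0,1\}^{R'n}$) of $2^\ell$ vectors each, where $\ell=\lambda n$ and $R'n=Rn-\ell$, and let $C_\Pi$ be the stochastic code encoding message $s$ as a uniformly random element of $A_s$. Then there is $\delta>0$ such that, with probability $1-e^{-\Omega(n)}$ over the choice of $C$, \[\mathrm{Sem}(C_\Pi)=\max_{P_{\mathbf S},\mathscr S}I\bigl(\mathbf S;\mathbf V(\mathscr S)\bigr)\le e^{-n\delta},\] where the maximum is over all distributions $P_{\mathbf S}$ on messages and all $\mathscr S\subseteq[n]$ with $|\mathscr S|=\rho_r n$.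
   Context: For a message $\mathbf S\sim P_{\mathbf S}$ with random encoding $\mathbf X$, and $\mathscr S\subseteq[n]$, $\mathbf V(\mathscr S)\in\{0,1,?\}^n$ is the string equal to $\mathbf X$ on coordinates in $\mathscr S$ and $?$ elsewhere. *)

theory Defs
  imports "HOL-Probability.Probability"
begin

text \<open>Binary vectors of length n are bool lists of length n. Coordinates are 0..n-1.\<close>

definition bin_vectors :: "nat \<Rightarrow> bool list set" where
  "bin_vectors n = {xs. length xs = n}"

text \<open>A code of 2^m blocks with 2^l vectors each: C s j is the j-th vector of block A_s.
  The set of all such codes; the uniform distribution on it makes all 2^(m+l) vectors
  independent and uniform.\<close>

definition codes :: "nat \<Rightarrow> nat \<Rightarrow> nat \<Rightarrow> (nat \<Rightarrow> nat \<Rightarrow> bool list) set" where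
  "codes n m l = ({..<2^m} \<rightarrow>\<^sub>E ({..<2^l} \<rightarrow>\<^sub>E bin_vectors n))"

text \<open>V(S): equal to x on coordinates in S and '?' (None) elsewhere.\<close>

definition reveal :: "nat \<Rightarrow> nat set \<Rightarrow> bool list \<Rightarrow> bool option list" where
  "reveal n S x = map (\<lambda>i. if i \<in> S then Some (x ! i) else None) [0..<n]"

definition mutual_info_pmf :: "('a \<times> 'b) pmf \<Rightarrow> real" where
  "mutual_info_pmf J = (\<Sum>ab\<in>set_pmf J. pmf J ab *
      log 2 (pmf J ab / (pmf (map_pmf fst J) (fst ab) * pmf (map_pmf snd J) (snd ab))))"

definition joint_SV :: "nat \<Rightarrow> nat \<Rightarrow> (nat \<Rightarrow> nat \<Rightarrow> bool list) \<Rightarrow> nat pmf \<Rightarrow> nat set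
    \<Rightarrow> (nat \<times> bool option list) pmf" where
  "joint_SV n l C PS S =
     do { s \<leftarrow> PS; j \<leftarrow> pmf_of_set {..<2^l}; return_pmf (s, reveal n S (C s j)) }"

text \<open>Semantic leakage: sup over message distributions on {0,1}^m (identified with
  {..<2^m}) and coordinate sets of size r.\<close>

definition Sem :: "nat \<Rightarrow> nat \<Rightarrow> nat \<Rightarrow> nat \<Rightarrow> (nat \<Rightarrow> nat \<Rightarrow> bool list) \<Rightarrow> real" where
  "Sem n m l r C = (SUP p \<in> {(PS, S). set_pmf PS \<subseteq> {..<2^m} \<and> S \<subseteq> {..<n} \<and> card S = r}.
       mutual_info_pmf (joint_SV n l C (fst p) (snd p)))"

end

theory Submission
  imports Defs "HOL-Real_Asymp.Real_Asymp"
begin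


lemma exp_upper_aux: assumes "0 \<le> (u::real)" "u \<le> 1" shows "exp u \<le> 1 + u + u^2"
  by (rule exp_bound[OF assms])

lemma exp_neg_aux: assumes "0 \<le> (u::real)" shows "exp (-u) \<le> 1 - u + u^2"
proof -
  have "1 + u \<le> exp u" by (rule exp_ge_add_one_self)
  have "(1 - u + u^2) * (1 + u) = 1 + u^3" by (simp add: algebra_simps power2_eq_square power3_eq_cube)
  also have "\<dots> \<ge> 1" using assms by simp
  finally have h: "1 \<le> (1 - u + u^2) * (1 + u)" .
  have pos: "0 < 1 - u + u^2" using h assms
    by (smt (verit) mult_nonpos_nonneg)
  have "exp (-u) = 1 / exp u" by (simp add: exp_minus field_simps)
  also have "\<dots> \<le> 1 / (1 + u)" using assms \<open>1 + u \<le> exp u\<close> by (intro divide_left_mono) auto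
  also have "\<dots> \<le> 1 - u + u^2" using h assms by (simp add: field_simps)
  finally show ?thesis .
qed

lemma mgf_bound:
  fixes q :: "'a pmf" and A :: "'b set" and t a :: real
  assumes fin: "finite A" and finq: "finite (set_pmf q)"
  shows "measure_pmf.prob (Pi_pmf A d (\<lambda>_. q)) {f. t * real (card {j\<in>A. g (f j)}) \<ge> t * a}
     \<le> exp (real (card A) * measure_pmf.prob q {x. g x} * (exp t - 1) - t * a)"
proof -
  define p where "p = measure_pmf.prob q {x. g x}"
  define h where "h x = (if g x then exp t else 1)" for x
  define M where "M = Pi_pmf A d (\<lambda>_. q)"
  have finM: "finite (set_pmf M)" unfolding M_def
    using set_Pi_pmf_subset'[OF fin, of d "\<lambda>_. q"] finite_PiE_dflt[OF fin, of "\<lambda>_. set_pmf q" d] finq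
    by (auto intro: finite_subset)
  have X: "(\<Prod>j\<in>A. h (f j)) = exp (t * real (card {j\<in>A. g (f j)}))" for f
  proof -
    have "(\<Prod>j\<in>A. h (f j)) = (\<Prod>j\<in>{j\<in>A. g (f j)}. exp t)"
      unfolding h_def using fin by (subst prod.If_cases) (auto simp: Int_def)
    also have "\<dots> = exp t ^ card {j\<in>A. g (f j)}" by (rule prod_constant)
    also have "\<dots> = exp (t * real (card {j\<in>A. g (f j)}))"
      by (simp add: exp_of_nat_mult[symmetric] mult.commute)
    finally show ?thesis .
  qed
  have Eh: "measure_pmf.expectation q h = 1 + p * (exp t - 1)"
  proof -
    have "h = (\<lambda>x. 1 + (exp t - 1) * indicator {x. g x} x)" unfolding h_def by (auto simp: fun_eq_iff)
    hence "measure_pmf.expectation q h = measure_pmf.expectation q (\<lambda>x. 1 + (exp t - 1) * indicator {x. g x} x)" by simp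
    also have "\<dots> = 1 + (exp t - 1) * p"
      unfolding p_def using finq
      by (subst Bochner_Integration.integral_add) (auto intro: integrable_measure_pmf_finite)
    finally show ?thesis by simp
  qed
  have EX: "measure_pmf.expectation M (\<lambda>f. \<Prod>j\<in>A. h (f j)) = (1 + p * (exp t - 1)) ^ card A"
    unfolding M_def
    by (subst expectation_prod_Pi_pmf) (use fin finq Eh in \<open>auto intro: integrable_measure_pmf_finite simp: h_def\<close>)
  have p01: "0 \<le> p" "p \<le> 1" unfolding p_def by auto
  have base: "0 \<le> 1 + p * (exp t - 1)"
  proof -
    have "1 + p * (exp t - 1) = (1 - p) + p * exp t" by (simp add: algebra_simps)
    moreover have "0 \<le> p * exp t" using p01 by simp
    ultimately show ?thesis using p01 by linarith
  qed
  have "(1 + p * (exp t - 1)) ^ card A \<le> exp (p * (exp t - 1)) ^ card A"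
    using base by (intro power_mono) (simp add: add.commute exp_ge_add_one_self, simp)
  also have "\<dots> = exp (real (card A) * p * (exp t - 1))"
    by (simp add: exp_of_nat_mult[symmetric] mult.assoc)
  finally have EXb: "measure_pmf.expectation M (\<lambda>f. \<Prod>j\<in>A. h (f j)) \<le> exp (real (card A) * p * (exp t - 1))"
    using EX by simp
  have ev: "{f. t * real (card {j\<in>A. g (f j)}) \<ge> t * a} = {f\<in>space (measure_pmf M). (\<Prod>j\<in>A. h (f j)) \<ge> exp (t * a)}"
    by (auto simp: X)
  have "measure_pmf.prob M {f\<in>space (measure_pmf M). (\<Prod>j\<in>A. h (f j)) \<ge> exp (t * a)}
      \<le> measure_pmf.expectation M (\<lambda>f. \<Prod>j\<in>A. h (f j)) / exp (t * a)"
    by (rule integral_Markov_inequality_measure) (use finM in \<open>auto intro: integrable_measure_pmf_finite simp: h_def intro!: prod_nonneg\<close>)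
  also have "\<dots> \<le> exp (real (card A) * p * (exp t - 1)) / exp (t * a)"
    using EXb by (intro divide_right_mono) auto
  also have "\<dots> = exp (real (card A) * p * (exp t - 1) - t * a)" by (simp add: exp_diff)
  finally show ?thesis unfolding ev M_def p_def .
qed

lemma chernoff_upper:
  fixes q :: "'a pmf" and A :: "'b set"
  assumes fin: "finite A" and finq: "finite (set_pmf q)" and e: "0 < e" "e \<le> 1"
  shows "measure_pmf.prob (Pi_pmf A d (\<lambda>_. q)) {f. real (card {j\<in>A. g (f j)}) \<ge> (1 + e) * (real (card A) * measure_pmf.prob q {x. g x})}
     \<le> exp (- (real (card A) * measure_pmf.prob q {x. g x}) * e^2 / 4)"
proof -
  define K where "K = real (card A) * measure_pmf.prob q {x. g x}"
  have K0: "0 \<le> K" unfolding K_def by auto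
  define u where "u = e / 2"
  have u: "0 < u" "u \<le> 1" using e by (auto simp: u_def)
  have "{f. real (card {j\<in>A. g (f j)}) \<ge> (1 + e) * K} = {f. u * real (card {j\<in>A. g (f j)}) \<ge> u * ((1 + e) * K)}"
    using u by auto
  hence "measure_pmf.prob (Pi_pmf A d (\<lambda>_. q)) {f. real (card {j\<in>A. g (f j)}) \<ge> (1 + e) * K}
     \<le> exp (K * (exp u - 1) - u * ((1 + e) * K))"
    using mgf_bound[OF fin finq, where t=u and g=g and a="(1+e)*K" and d=d] by (simp add: K_def)
  also have "\<dots> \<le> exp (- K * e^2 / 4)"
  proof -
    have "exp u - 1 \<le> u + u^2" using exp_upper_aux[of u] u by simp
    hence "K * (exp u - 1) \<le> K * (u + u^2)" using K0 by (intro mult_left_mono) auto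
    moreover have "K * (u + u^2) - u * ((1 + e) * K) = - K * e^2 / 4"
      by (simp add: u_def algebra_simps power2_eq_square)
    ultimately show ?thesis by simp
  qed
  finally show ?thesis by (simp add: K_def)
qed

lemma chernoff_lower:
  fixes q :: "'a pmf" and A :: "'b set"
  assumes fin: "finite A" and finq: "finite (set_pmf q)" and e: "0 < e" "e \<le> 1"
  shows "measure_pmf.prob (Pi_pmf A d (\<lambda>_. q)) {f. real (card {j\<in>A. g (f j)}) \<le> (1 - e) * (real (card A) * measure_pmf.prob q {x. g x})}
     \<le> exp (- (real (card A) * measure_pmf.prob q {x. g x}) * e^2 / 4)"
proof -
  define K where "K = real (card A) * measure_pmf.prob q {x. g x}"
  have K0: "0 \<le> K" unfolding K_def by auto
  define u where "u = e / 2"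
  have u: "0 < u" "u \<le> 1" using e by (auto simp: u_def)
  have "{f. real (card {j\<in>A. g (f j)}) \<le> (1 - e) * K} = {f. (-u) * real (card {j\<in>A. g (f j)}) \<ge> (-u) * ((1 - e) * K)}"
    using u by auto
  hence "measure_pmf.prob (Pi_pmf A d (\<lambda>_. q)) {f. real (card {j\<in>A. g (f j)}) \<le> (1 - e) * K}
     \<le> exp (K * (exp (-u) - 1) - (-u) * ((1 - e) * K))"
    using mgf_bound[OF fin finq, where t="-u" and g=g and a="(1-e)*K" and d=d] by (simp add: K_def)
  also have "\<dots> \<le> exp (- K * e^2 / 4)"
  proof -
    have "exp (-u) - 1 \<le> -u + u^2" using exp_neg_aux[of u] u by simp
    hence "K * (exp (-u) - 1) \<le> K * (-u + u^2)" using K0 by (intro mult_left_mono) auto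
    moreover have "K * (-u + u^2) - (-u) * ((1 - e) * K) = - K * e^2 / 4"
      unfolding u_def power2_eq_square by (simp add: field_simps)
    ultimately show ?thesis by simp
  qed
  finally show ?thesis by (simp add: K_def)
qed



lemma count_fix:
  assumes "S \<subseteq> {..<n}"
  shows "card {x \<in> bin_vectors n. \<forall>i\<in>S. x ! i = w i} = 2 ^ (n - card S)"
  using assms
proof (induction n arbitrary: S w)
  case 0
  hence "S = {}" by auto
  moreover have "bin_vectors 0 = {[]}" by (auto simp: bin_vectors_def)
  ultimately show ?case by simp
next
  case (Suc n)
  define S' where "S' = {i. Suc i \<in> S}"
  have S'sub: "S' \<subseteq> {..<n}" using Suc.prems by (auto simp: S'_def)
  define B where "B = {b. 0 \<in> S \<longrightarrow> b = w 0}"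
  define X where "X = {xs \<in> bin_vectors n. \<forall>i\<in>S'. xs ! i = w (Suc i)}"
  have IH: "card X = 2 ^ (n - card S')" unfolding X_def using Suc.IH[OF S'sub] .
  have eq: "{x \<in> bin_vectors (Suc n). \<forall>i\<in>S. x ! i = w i} = (\<lambda>(b,xs). b # xs) ` (B \<times> X)"
  proof (intro equalityI subsetI)
    fix x assume x: "x \<in> {x \<in> bin_vectors (Suc n). \<forall>i\<in>S. x ! i = w i}"
    have lx: "length x = Suc n" and xS: "\<forall>i\<in>S. x ! i = w i" using x by (auto simp: bin_vectors_def)
    obtain b xs where bx: "x = b # xs" "length xs = n" using lx by (cases x) auto
    have "b \<in> B"
    proof -
      have "0 \<in> S \<longrightarrow> x ! 0 = w 0" using xS by blast
      thus ?thesis using bx by (simp add: B_def)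
    qed
    moreover have "xs \<in> X"
    proof -
      have "\<forall>i\<in>S'. xs ! i = w (Suc i)"
      proof
        fix i assume "i \<in> S'"
        hence "Suc i \<in> S" by (simp add: S'_def)
        hence "x ! Suc i = w (Suc i)" using xS by blast
        thus "xs ! i = w (Suc i)" using bx by simp
      qed
      thus ?thesis using bx by (simp add: X_def bin_vectors_def)
    qed
    ultimately have "(b, xs) \<in> B \<times> X" by blast
    thus "x \<in> (\<lambda>(b,xs). b # xs) ` (B \<times> X)" using bx by (intro rev_image_eqI[of "(b,xs)"]) auto
  next
    fix x assume "x \<in> (\<lambda>(b,xs). b # xs) ` (B \<times> X)"
    then obtain b xs where bx: "x = b # xs" "b \<in> B" "xs \<in> X" by auto
    have "\<forall>i\<in>S. x ! i = w i"
    proof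
      fix i assume "i \<in> S"
      show "x ! i = w i"
      proof (cases i)
        case 0 thus ?thesis using bx \<open>i \<in> S\<close> by (simp add: B_def)
      next
        case (Suc k)
        hence "k \<in> S'" using \<open>i \<in> S\<close> by (simp add: S'_def)
        thus ?thesis using bx Suc by (simp add: X_def)
      qed
    qed
    thus "x \<in> {x \<in> bin_vectors (Suc n). \<forall>i\<in>S. x ! i = w i}" using bx by (auto simp: X_def bin_vectors_def)
  qed
  have inj: "inj_on (\<lambda>(b,xs). b # xs) (B \<times> X)" by (auto simp: inj_on_def)
  have finX: "finite X" using IH by (intro card_ge_0_finite) simp
  have cardeq: "card {x \<in> bin_vectors (Suc n). \<forall>i\<in>S. x ! i = w i} = card B * card X"
    unfolding eq using inj finX by (simp add: card_image card_cartesian_product)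
  have SS: "S - {0} = Suc ` S'"
  proof (intro equalityI subsetI)
    fix x assume x: "x \<in> S - {0}"
    then obtain i where "x = Suc i" by (cases x) auto
    thus "x \<in> Suc ` S'" using x by (auto simp: S'_def)
  next
    fix x assume "x \<in> Suc ` S'" thus "x \<in> S - {0}" by (auto simp: S'_def)
  qed
  have finS: "finite S" using Suc.prems finite_subset by blast
  have cS': "card S' = card (S - {0})" unfolding SS by (simp add: card_image)
  have cS'n: "card S' \<le> n" using S'sub card_mono[of "{..<n}" S'] by simp
  show ?case
  proof (cases "0 \<in> S")
    case True
    hence "B = {w 0}" by (auto simp: B_def)
    moreover have "card S = Suc (card S')" using True finS cS' card_Suc_Diff1 by fastforce
    ultimately show ?thesis using cardeq IH by simp
  next
    case False
    hence "B = UNIV" by (auto simp: B_def)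
    hence "card B = 2" by (simp add: UNIV_bool)
    moreover have "card S = card S'" using False cS' by simp
    ultimately show ?thesis using cardeq IH cS'n by (simp add: Suc_diff_le)
  qed
qed

lemma card_bin: "card (bin_vectors n) = 2 ^ n"
  using count_fix[of "{}" n] by simp

lemma finite_bin: "finite (bin_vectors n)"
  using card_bin by (intro card_ge_0_finite) simp

lemma bin_ne: "bin_vectors n \<noteq> {}"
  by (auto simp: bin_vectors_def intro: exI[of _ "replicate n False"])

lemma reveal_eq_iff:
  assumes "S \<subseteq> {..<n}"
  shows "reveal n S x = reveal n S y \<longleftrightarrow> (\<forall>i\<in>S. x ! i = y ! i)"
  using assms by (auto simp: reveal_def map_eq_conv)

lemma prob_reveal:
  assumes "S \<subseteq> {..<n}"
  shows "measure_pmf.prob (pmf_of_set (bin_vectors n)) {x. reveal n S x = reveal n S y} = 1 / 2 ^ card S"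
proof -
  have "bin_vectors n \<inter> {x. reveal n S x = reveal n S y} = {x \<in> bin_vectors n. \<forall>i\<in>S. x ! i = y ! i}"
    using reveal_eq_iff[OF assms] by auto
  hence "measure_pmf.prob (pmf_of_set (bin_vectors n)) {x. reveal n S x = reveal n S y}
     = 2 ^ (n - card S) / 2 ^ n"
    using count_fix[OF assms, of "\<lambda>i. y ! i"] by (simp add: measure_pmf_of_set finite_bin bin_ne card_bin)
  also have "\<dots> = 1 / 2 ^ card S"
  proof -
    have "card S \<le> n" using assms card_mono[of "{..<n}" S] by simp
    hence "(2::real) ^ n = 2 ^ (n - card S) * 2 ^ card S" by (simp add: power_add[symmetric])
    thus ?thesis by simp
  qed
  finally show ?thesis .
qed

lemma PiE_dflt_undefined: "PiE_dflt A undefined B = PiE A B"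
  by (auto simp: PiE_dflt_def PiE_def extensional_def)

lemma pmf_of_set_PiE:
  assumes "finite A" "\<And>x. x \<in> A \<Longrightarrow> finite (B x)" "\<And>x. x \<in> A \<Longrightarrow> B x \<noteq> {}"
  shows "pmf_of_set (PiE A B) = Pi_pmf A undefined (\<lambda>x. pmf_of_set (B x))"
  using Pi_pmf_of_set[OF assms, where d=undefined] by (simp add: PiE_dflt_undefined)

lemma codes_component:
  assumes "s < 2 ^ m"
  shows "map_pmf (\<lambda>C. C s) (pmf_of_set (codes n m l)) =
     Pi_pmf {..<(2::nat)^l} undefined (\<lambda>_. pmf_of_set (bin_vectors n))"
proof -
  have inner: "pmf_of_set ({..<(2::nat)^l} \<rightarrow>\<^sub>E bin_vectors n) = Pi_pmf {..<(2::nat)^l} undefined (\<lambda>_. pmf_of_set (bin_vectors n))"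
    by (rule pmf_of_set_PiE) (auto simp: finite_bin bin_ne)
  have "pmf_of_set (codes n m l) = Pi_pmf {..<(2::nat)^m} undefined (\<lambda>_. pmf_of_set ({..<(2::nat)^l} \<rightarrow>\<^sub>E bin_vectors n))"
    unfolding codes_def
    by (rule pmf_of_set_PiE) (auto simp: finite_bin bin_ne PiE_eq_empty_iff intro!: finite_PiE)
  thus ?thesis using assms inner by (simp add: Pi_pmf_component)
qed

lemma codes_component_prob:
  assumes "s < 2 ^ m"
  shows "measure_pmf.prob (pmf_of_set (codes n m l)) {C. \<Phi> (C s)} =
     measure_pmf.prob (Pi_pmf {..<(2::nat)^l} undefined (\<lambda>_. pmf_of_set (bin_vectors n))) {f. \<Phi> f}"
proof -
  have "measure_pmf.prob (pmf_of_set (codes n m l)) {C. \<Phi> (C s)} =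
      measure_pmf.prob (map_pmf (\<lambda>C. C s) (pmf_of_set (codes n m l))) {f. \<Phi> f}"
    by (simp add: measure_map_pmf vimage_def)
  thus ?thesis using codes_component[OF assms] by simp
qed

lemma bad_upper:
  assumes "S \<subseteq> {..<n}" "card S = r" "s < 2 ^ m" "0 < e" "e \<le> 1"
  shows "measure_pmf.prob (pmf_of_set (codes n m l))
     {C. real (card {j\<in>{..<(2::nat)^l}. reveal n S (C s j) = reveal n S y}) \<ge> (1 + e) * (2 ^ l / 2 ^ r)}
     \<le> exp (- (2 ^ l / 2 ^ r) * e^2 / 4)"
  using chernoff_upper[of "{..<(2::nat)^l}" "pmf_of_set (bin_vectors n)" e undefined "\<lambda>x. reveal n S x = reveal n S y"]
    assms prob_reveal[OF assms(1), of y]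
  by (subst codes_component_prob[OF assms(3)]) (simp add: finite_bin bin_ne)

lemma bad_lower:
  assumes "S \<subseteq> {..<n}" "card S = r" "s < 2 ^ m" "0 < e" "e \<le> 1"
  shows "measure_pmf.prob (pmf_of_set (codes n m l))
     {C. real (card {j\<in>{..<(2::nat)^l}. reveal n S (C s j) = reveal n S y}) \<le> (1 - e) * (2 ^ l / 2 ^ r)}
     \<le> exp (- (2 ^ l / 2 ^ r) * e^2 / 4)"
  using chernoff_lower[of "{..<(2::nat)^l}" "pmf_of_set (bin_vectors n)" e undefined "\<lambda>x. reveal n S x = reveal n S y"]
    assms prob_reveal[OF assms(1), of y]
  by (subst codes_component_prob[OF assms(3)]) (simp add: finite_bin bin_ne)



lemma pmf_bind_Pair:
  "pmf (bind_pmf p (\<lambda>s. map_pmf (Pair s) (K s))) (a, b) = pmf p a * pmf (K a) b"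
proof -
  have "pmf (bind_pmf p (\<lambda>s. map_pmf (Pair s) (K s))) (a, b) =
      measure_pmf.expectation p (\<lambda>s. pmf (map_pmf (Pair s) (K s)) (a, b))" by (rule pmf_bind)
  also have "(\<lambda>s. pmf (map_pmf (Pair s) (K s)) (a, b)) = (\<lambda>s. pmf (K a) b * indicator {a} s)"
  proof
    fix s show "pmf (map_pmf (Pair s) (K s)) (a, b) = pmf (K a) b * indicator {a} s"
    proof (cases "s = a")
      case True
      have "Pair s -` {(a, b)} = {b}" using True by auto
      thus ?thesis using True by (simp add: pmf_map measure_pmf_single)
    next
      case False
      have "Pair s -` {(a, b)} = {}" using False by auto
      thus ?thesis using False by (simp add: pmf_map)
    qed
  qed
  also have "measure_pmf.expectation p (\<lambda>s. pmf (K a) b * indicator {a} s) = pmf (K a) b * pmf p a"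
    by (simp add: measure_pmf_single)
  finally show ?thesis by simp
qed

definition cnt :: "nat \<Rightarrow> nat \<Rightarrow> (nat \<Rightarrow> nat \<Rightarrow> bool list) \<Rightarrow> nat \<Rightarrow> nat set \<Rightarrow> bool option list \<Rightarrow> nat" where
  "cnt n l C s S v = card {j\<in>{..<(2::nat)^l}. reveal n S (C s j) = v}"

definition good :: "nat \<Rightarrow> nat \<Rightarrow> nat \<Rightarrow> nat \<Rightarrow> real \<Rightarrow> (nat \<Rightarrow> nat \<Rightarrow> bool list) \<Rightarrow> bool" where
  "good n m l r e C \<longleftrightarrow> (\<forall>s<2^m. \<forall>S. S \<subseteq> {..<n} \<and> card S = r \<longrightarrow> (\<forall>x\<in>bin_vectors n.
     (1 - e) * (2 ^ l / 2 ^ r) < real (cnt n l C s S (reveal n S x)) \<and>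
     real (cnt n l C s S (reveal n S x)) < (1 + e) * (2 ^ l / 2 ^ r)))"

lemma info_bound:
  assumes C: "C \<in> codes n m l" and g: "good n m l r e C" and e: "0 < e" "e < 1"
    and PS: "set_pmf PS \<subseteq> {..<2^m}" and S: "S \<subseteq> {..<n}" "card S = r"
  shows "mutual_info_pmf (joint_SV n l C PS S) \<le> log 2 ((1 + e) / (1 - e))"
proof -
  define K where "K s = map_pmf (\<lambda>j. reveal n S (C s j)) (pmf_of_set {..<(2::nat)^l})" for s
  define J where "J = joint_SV n l C PS S"
  have J: "J = bind_pmf PS (\<lambda>s. map_pmf (Pair s) (K s))"
    unfolding J_def joint_SV_def K_def by (simp add: map_pmf_def bind_assoc_pmf bind_return_pmf)
  have fstJ: "map_pmf fst J = PS"
    unfolding J by (simp add: map_bind_pmf map_pmf_comp o_def map_pmf_const bind_return_pmf')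
  have sndJ: "map_pmf snd J = bind_pmf PS K"
    unfolding J by (simp add: map_bind_pmf map_pmf_comp o_def)
  have "(0::nat) \<in> {..<(2::nat)^l}" by simp
  hence ne: "{..<(2::nat)^l} \<noteq> {}" by blast
  have pK: "pmf (K s) v = real (cnt n l C s S v) / 2 ^ l" for s v
  proof -
    have "pmf (K s) v = measure_pmf.prob (pmf_of_set {..<(2::nat)^l}) ((\<lambda>j. reveal n S (C s j)) -` {v})"
      unfolding K_def by (rule pmf_map)
    also have "\<dots> = real (card ({..<(2::nat)^l} \<inter> ((\<lambda>j. reveal n S (C s j)) -` {v}))) / real (card {..<(2::nat)^l})"
      using ne by (simp add: measure_pmf_of_set)
    also have "{..<(2::nat)^l} \<inter> ((\<lambda>j. reveal n S (C s j)) -` {v}) = {j\<in>{..<(2::nat)^l}. reveal n S (C s j) = v}"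
      by auto
    finally show ?thesis by (simp add: cnt_def)
  qed
  have setK: "set_pmf (K s) = (\<lambda>j. reveal n S (C s j)) ` {..<(2::nat)^l}" for s
    unfolding K_def using ne by simp
  have Cbin: "C s j \<in> bin_vectors n" if "s < 2^m" "j < 2^l" for s j
    using C that unfolding codes_def by (auto simp: PiE_iff)
  have setJ: "set_pmf J \<subseteq> {..<2^m} \<times> (reveal n S ` bin_vectors n)"
    using PS Cbin unfolding J by (auto simp: setK)
  have finJ: "finite (set_pmf J)"
    using setJ by (rule finite_subset) (simp add: finite_bin)
  have finPS: "finite (set_pmf PS)" using PS by (rule finite_subset) simp
  define L where "L = log 2 ((1 + e) / (1 - e))"
  have trm: "pmf J ab * log 2 (pmf J ab / (pmf (map_pmf fst J) (fst ab) * pmf (map_pmf snd J) (snd ab)))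
      \<le> pmf J ab * L" if ab: "ab \<in> set_pmf J" for ab
  proof -
    obtain a b where abd: "ab = (a, b)" by (cases ab)
    have a: "a < 2^m" and "b \<in> reveal n S ` bin_vectors n" using setJ ab abd by auto
    then obtain x where x: "x \<in> bin_vectors n" "b = reveal n S x" by auto
    have pJ: "pmf J ab = pmf PS a * pmf (K a) b" unfolding J abd by (rule pmf_bind_Pair)
    have pos: "0 < pmf J ab" using ab by (simp add: pmf_positive)
    hence pa: "0 < pmf PS a" and pkb: "0 < pmf (K a) b" using pJ
      by (auto simp: zero_less_mult_iff pmf_nonneg dest: order.strict_trans2[OF _ pmf_nonneg]) 
    have up: "pmf (K a) b \<le> (1 + e) / 2 ^ r"
    proof -
      have "real (cnt n l C a S b) < (1 + e) * (2 ^ l / 2 ^ r)" using g a S x unfolding good_def by blast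
      thus ?thesis unfolding pK by (simp add: field_simps)
    qed
    have low: "(1 - e) / 2 ^ r \<le> pmf (bind_pmf PS K) b"
    proof -
      have lb: "(1 - e) / 2 ^ r \<le> pmf (K s) b" if "s \<in> set_pmf PS" for s
      proof -
        have "s < 2^m" using that PS by auto
        hence "(1 - e) * (2 ^ l / 2 ^ r) < real (cnt n l C s S b)" using g S x unfolding good_def by blast
        thus ?thesis unfolding pK by (simp add: field_simps)
      qed
      show ?thesis unfolding pmf_bind
        by (rule measure_pmf.integral_ge_const) (use finPS lb in \<open>auto intro: integrable_measure_pmf_finite AE_pmfI\<close>)
    qed
    have lowpos: "0 < (1 - e) / 2 ^ r" using e by simp
    have ratio: "pmf J ab / (pmf PS a * pmf (bind_pmf PS K) b) = pmf (K a) b / pmf (bind_pmf PS K) b"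
      using pa pJ by simp
    have "pmf (K a) b / pmf (bind_pmf PS K) b \<le> ((1 + e) / 2 ^ r) / ((1 - e) / 2 ^ r)"
      using up low lowpos pkb by (intro frac_le) auto
    also have "\<dots> = (1 + e) / (1 - e)" by simp
    finally have rb: "pmf (K a) b / pmf (bind_pmf PS K) b \<le> (1 + e) / (1 - e)" .
    have "log 2 (pmf (K a) b / pmf (bind_pmf PS K) b) \<le> L"
      unfolding L_def using rb pkb low lowpos by (intro log_mono) auto
    thus ?thesis using pos ratio fstJ sndJ abd by (simp add: mult_left_mono)
  qed
  have "mutual_info_pmf J \<le> (\<Sum>ab\<in>set_pmf J. pmf J ab * L)"
    unfolding mutual_info_pmf_def by (rule sum_mono) (rule trm)
  also have "\<dots> = L" using finJ by (simp add: sum_distrib_right[symmetric] sum_pmf_eq_1)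
  finally show ?thesis unfolding J_def L_def .
qed



lemma codes_fin: "finite (codes n m l)"
  unfolding codes_def by (intro finite_PiE) (auto simp: finite_bin)

lemma codes_ne: "codes n m l \<noteq> {}"
  unfolding codes_def by (auto simp: PiE_eq_empty_iff bin_ne)

lemma card_subsets_le: "card {S. S \<subseteq> {..<n} \<and> card S = r} \<le> 2 ^ n"
proof -
  have "card {S. S \<subseteq> {..<n} \<and> card S = r} \<le> card (Pow {..<n})"
    by (intro card_mono) auto
  thus ?thesis by (simp add: card_Pow)
qed

lemma prob_not_good:
  assumes e: "0 < e" "e \<le> 1"
  shows "measure_pmf.prob (pmf_of_set (codes n m l)) {C. \<not> good n m l r e C}
     \<le> 2 ^ m * 2 ^ n * 2 ^ n * (2 * exp (- (2 ^ l / 2 ^ r) * e^2 / 4))"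
proof -
  define D where "D = pmf_of_set (codes n m l)"
  define I where "I = {..<(2::nat)^m} \<times> {S. S \<subseteq> {..<n} \<and> card S = r} \<times> bin_vectors n"
  define U where "U = (\<lambda>(s, S, x). {C. real (cnt n l C s S (reveal n S x)) \<ge> (1 + e) * (2 ^ l / 2 ^ r)}
     \<union> {C. real (cnt n l C s S (reveal n S x)) \<le> (1 - e) * (2 ^ l / 2 ^ r)})"
  have finI: "finite I" unfolding I_def
    by (intro finite_cartesian_product finite_bin) (auto intro: finite_subset[of _ "Pow {..<n}"])
  have cardI: "real (card I) \<le> 2 ^ m * 2 ^ n * 2 ^ n"
  proof -
    have "card I = 2 ^ m * (card {S. S \<subseteq> {..<n} \<and> card S = r} * 2 ^ n)"
      unfolding I_def by (simp add: card_cartesian_product card_bin)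
    also have "\<dots> \<le> 2 ^ m * (2 ^ n * 2 ^ n)" using card_subsets_le[of n r] by simp
    finally have "card I \<le> 2 ^ m * 2 ^ n * 2 ^ n" by simp
    hence "real (card I) \<le> real (2 ^ m * 2 ^ n * 2 ^ n)" by linarith
    thus ?thesis by simp
  qed
  have sub: "{C. \<not> good n m l r e C} \<subseteq> (\<Union>i\<in>I. U i)"
    unfolding good_def U_def I_def by (force simp: not_less)
  have each: "measure_pmf.prob D (U i) \<le> 2 * exp (- (2 ^ l / 2 ^ r) * e^2 / 4)" if "i \<in> I" for i
  proof -
    obtain s S x where i: "i = (s, S, x)" by (cases i) auto
    have s: "s < 2^m" and S: "S \<subseteq> {..<n}" "card S = r" using that i by (auto simp: I_def)
    have "measure_pmf.prob D (U i) \<le>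
       measure_pmf.prob D {C. real (cnt n l C s S (reveal n S x)) \<ge> (1 + e) * (2 ^ l / 2 ^ r)} +
       measure_pmf.prob D {C. real (cnt n l C s S (reveal n S x)) \<le> (1 - e) * (2 ^ l / 2 ^ r)}"
      unfolding i U_def by (simp add: measure_subadditive measure_pmf.emeasure_finite)
    also have "\<dots> \<le> exp (- (2 ^ l / 2 ^ r) * e^2 / 4) + exp (- (2 ^ l / 2 ^ r) * e^2 / 4)"
      unfolding D_def cnt_def
      by (intro add_mono bad_upper[OF S s e] bad_lower[OF S s e])
    finally show ?thesis by simp
  qed
  have "measure_pmf.prob D {C. \<not> good n m l r e C} \<le> measure_pmf.prob D (\<Union>i\<in>I. U i)"
    using sub by (intro measure_pmf.finite_measure_mono) auto
  also have "\<dots> \<le> (\<Sum>i\<in>I. measure_pmf.prob D (U i))"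
    using finI by (intro measure_pmf.finite_measure_subadditive_finite) auto
  also have "\<dots> \<le> (\<Sum>i\<in>I. 2 * exp (- (2 ^ l / 2 ^ r) * e^2 / 4))"
    by (intro sum_mono each)
  also have "\<dots> = real (card I) * (2 * exp (- (2 ^ l / 2 ^ r) * e^2 / 4))" by simp
  also have "\<dots> \<le> 2 ^ m * 2 ^ n * 2 ^ n * (2 * exp (- (2 ^ l / 2 ^ r) * e^2 / 4))"
    using cardI by (intro mult_right_mono) auto
  finally show ?thesis unfolding D_def .
qed

lemma Sem_good:
  assumes C: "C \<in> codes n m l" and g: "good n m l r e C" and e: "0 < e" "e < 1" and r: "r \<le> n"
  shows "Sem n m l r C \<le> log 2 ((1 + e) / (1 - e))"
  unfolding Sem_def
proof (rule cSUP_least)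
  show "{(PS, S). set_pmf PS \<subseteq> {..<(2::nat) ^ m} \<and> S \<subseteq> {..<n} \<and> card S = r} \<noteq> {}"
  proof -
    have "(return_pmf 0, {..<r}) \<in> {(PS, S). set_pmf PS \<subseteq> {..<(2::nat) ^ m} \<and> S \<subseteq> {..<n} \<and> card S = r}"
      using r by auto
    thus ?thesis by blast
  qed
next
  fix p assume "p \<in> {(PS, S). set_pmf PS \<subseteq> {..<(2::nat) ^ m} \<and> S \<subseteq> {..<n} \<and> card S = r}"
  thus "mutual_info_pmf (joint_SV n l C (fst p) (snd p)) \<le> log 2 ((1 + e) / (1 - e))"
    using info_bound[OF C g e] by auto
qed

lemma finite_n_bound:
  assumes e: "0 < e" "e < 1" and r: "r \<le> n" and B: "log 2 ((1 + e) / (1 - e)) \<le> B"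
  shows "measure_pmf.prob (pmf_of_set (codes n m l)) {C. Sem n m l r C \<le> B}
     \<ge> 1 - 2 ^ m * 2 ^ n * 2 ^ n * (2 * exp (- (2 ^ l / 2 ^ r) * e^2 / 4))"
proof -
  define D where "D = pmf_of_set (codes n m l)"
  have setD: "set_pmf D = codes n m l" unfolding D_def using codes_fin codes_ne by simp
  have "measure_pmf.prob D (- {C. Sem n m l r C \<le> B}) = measure_pmf.prob D (- {C. Sem n m l r C \<le> B} \<inter> set_pmf D)"
    by (simp add: measure_Int_set_pmf)
  also have "\<dots> \<le> measure_pmf.prob D {C. \<not> good n m l r e C}"
  proof (intro measure_pmf.finite_measure_mono)
    show "- {C. Sem n m l r C \<le> B} \<inter> set_pmf D \<subseteq> {C. \<not> good n m l r e C}"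
      using Sem_good[OF _ _ e r] B setD by force
  qed auto
  also have "\<dots> \<le> 2 ^ m * 2 ^ n * 2 ^ n * (2 * exp (- (2 ^ l / 2 ^ r) * e^2 / 4))"
    unfolding D_def using prob_not_good e by simp
  finally have "measure_pmf.prob D (- {C. Sem n m l r C \<le> B}) \<le> 2 ^ m * 2 ^ n * 2 ^ n * (2 * exp (- (2 ^ l / 2 ^ r) * e^2 / 4))" .
  moreover have "measure_pmf.prob D (- {C. Sem n m l r C \<le> B}) = 1 - measure_pmf.prob D {C. Sem n m l r C \<le> B}"
    using measure_pmf.prob_compl[of "{C. Sem n m l r C \<le> B}" D] by (simp add: Compl_eq_Diff_UNIV)
  ultimately show ?thesis unfolding D_def by linarith
qed



lemma log_ratio_bound:
  fixes e :: real assumes "0 < e" "e \<le> 1/2"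
  shows "log 2 ((1 + e) / (1 - e)) \<le> 4 / ln 2 * e"
proof -
  have pos: "0 < (1 + e) / (1 - e)" using assms by simp
  have "ln ((1 + e) / (1 - e)) \<le> (1 + e) / (1 - e) - 1" using pos by (rule ln_le_minus_one)
  also have "\<dots> = 2 * e / (1 - e)" using assms by (simp add: field_simps)
  also have "\<dots> \<le> 4 * e" using assms by (simp add: field_simps)
  finally have "ln ((1 + e) / (1 - e)) \<le> 4 * e" .
  thus ?thesis by (simp add: log_def divide_right_mono)
qed

lemma nat_floor_bounds:
  fixes x :: real assumes "0 \<le> x"
  shows "x - 1 \<le> real (nat \<lfloor>x\<rfloor>)" "real (nat \<lfloor>x\<rfloor>) \<le> x"
proof -
  have f: "0 \<le> \<lfloor>x\<rfloor>" using assms by simp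
  hence "real (nat \<lfloor>x\<rfloor>) = real_of_int \<lfloor>x\<rfloor>" by simp
  thus "x - 1 \<le> real (nat \<lfloor>x\<rfloor>)" "real (nat \<lfloor>x\<rfloor>) \<le> x" using floor_correct[of x] by linarith+
qed

theorem mainTheorem7:
  fixes rho R lam :: real
  assumes "0 < rho" "rho < 1" "rho < lam" "lam < R"
  shows "\<exists>\<delta>>0. \<exists>c>0. \<exists>N. \<forall>n\<ge>N.
    (let l = nat \<lfloor>lam * real n\<rfloor>; m = nat \<lfloor>R * real n\<rfloor> - l; r = nat \<lfloor>rho * real n\<rfloor> in
      measure_pmf.prob (pmf_of_set (codes n m l))
        {C. Sem n m l r C \<le> exp (- real n * \<delta>)} \<ge> 1 - exp (- c * real n))"
proof -
  define a where "a = lam - rho"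
  have a: "0 < a" using assms by (simp add: a_def)
  define \<delta> where "\<delta> = a * ln 2 / 8"
  have d: "0 < \<delta>" using a by (simp add: \<delta>_def)
  define b where "b = a * ln 2 / 2"
  have b: "0 < b" using a by (simp add: b_def)
  define K where "K = (R + 2) * ln 2 + 1"
  have E1: "eventually (\<lambda>n::nat. exp (- real n * (2 * \<delta>)) \<le> 1/2) sequentially"
    using d by real_asymp
  have E2: "eventually (\<lambda>n::nat. 4 / ln 2 \<le> exp (real n * \<delta>)) sequentially"
    using d by real_asymp
  have E3: "eventually (\<lambda>n::nat. K * real n + ln 2 \<le> exp (b * real n) / 8) sequentially"
    using b by real_asymp
  obtain N where N: "\<And>n. n \<ge> N \<Longrightarrow> exp (- real n * (2 * \<delta>)) \<le> 1/2 \<and> 4 / ln 2 \<le> exp (real n * \<delta>)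
      \<and> K * real n + ln 2 \<le> exp (b * real n) / 8"
    using eventually_conj[OF E1 eventually_conj[OF E2 E3]] unfolding eventually_sequentially by blast
  have ALL: "\<forall>n\<ge>N. (let l = nat \<lfloor>lam * real n\<rfloor>; m = nat \<lfloor>R * real n\<rfloor> - l; r = nat \<lfloor>rho * real n\<rfloor> in
      measure_pmf.prob (pmf_of_set (codes n m l))
        {C. Sem n m l r C \<le> exp (- real n * \<delta>)} \<ge> 1 - exp (- 1 * real n))"
  proof (intro allI impI)
    fix n assume nN: "N \<le> n"
    note Nn = N[OF nN]
    define l where "l = nat \<lfloor>lam * real n\<rfloor>"
    define m where "m = nat \<lfloor>R * real n\<rfloor> - l"
    define r where "r = nat \<lfloor>rho * real n\<rfloor>"
    define e where "e = exp (- real n * (2 * \<delta>))"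
    have e: "0 < e" "e \<le> 1/2" using Nn by (auto simp: e_def)
    have n0: "0 \<le> real n" by simp
    have rb1: "real r \<le> rho * real n" using nat_floor_bounds(2)[of "rho * real n"] assms n0
      unfolding r_def by simp
    have "rho * real n \<le> real n" using mult_left_le_one_le[of "real n" rho] assms n0 by simp
    hence rb: "real r \<le> rho * real n" "real r \<le> real n" using rb1 by linarith+
    have rn: "r \<le> n" using rb(2) by simp
    have lb: "lam * real n - 1 \<le> real l" using nat_floor_bounds(1)[of "lam * real n"] assms n0
      unfolding l_def by simp
    have mb: "real m \<le> R * real n"
    proof -
      have "real m \<le> real (nat \<lfloor>R * real n\<rfloor>)" unfolding m_def by simp
      also have "\<dots> \<le> R * real n" using nat_floor_bounds(2)[of "R * real n"] assms n0 by simp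
      finally show ?thesis .
    qed
    have Bd: "log 2 ((1 + e) / (1 - e)) \<le> exp (- real n * \<delta>)"
    proof -
      have "log 2 ((1 + e) / (1 - e)) \<le> 4 / ln 2 * e" using e by (rule log_ratio_bound)
      also have "\<dots> \<le> exp (real n * \<delta>) * e" using Nn e by (intro mult_right_mono) auto
      also have "\<dots> = exp (- real n * \<delta>)" unfolding e_def by (simp add: exp_add[symmetric] algebra_simps)
      finally show ?thesis .
    qed
    have main: "measure_pmf.prob (pmf_of_set (codes n m l)) {C. Sem n m l r C \<le> exp (- real n * \<delta>)}
       \<ge> 1 - 2 ^ m * 2 ^ n * 2 ^ n * (2 * exp (- (2 ^ l / 2 ^ r) * e^2 / 4))"
      using e by (intro finite_n_bound[OF _ _ rn Bd]) auto
    have mu: "exp (b * real n) / 8 \<le> (2 ^ l / 2 ^ r) * e^2 / 4"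
    proof -
      have "(2::real) ^ l / 2 ^ r = exp ((real l - real r) * ln 2)"
        by (simp add: powr_realpow[symmetric] powr_def exp_diff[symmetric] left_diff_distrib)
      moreover have "(a * real n - 1) * ln 2 \<le> (real l - real r) * ln 2"
        using lb rb unfolding a_def by (intro mult_right_mono) (auto simp: algebra_simps)
      ultimately have h1: "exp ((a * real n - 1) * ln 2) \<le> (2::real) ^ l / 2 ^ r" by simp
      have h2: "e^2 = exp (- real n * (4 * \<delta>))" unfolding e_def
        by (simp add: power2_eq_square exp_add[symmetric] algebra_simps)
      have "exp ((a * real n - 1) * ln 2) * exp (- real n * (4 * \<delta>)) \<le> (2 ^ l / 2 ^ r) * e^2"
        unfolding h2 by (rule mult_right_mono[OF h1]) simp
      hence "exp ((a * real n - 1) * ln 2) * exp (- real n * (4 * \<delta>)) / 4 \<le> (2 ^ l / 2 ^ r) * e^2 / 4"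
        by (rule divide_right_mono) simp
      moreover have "exp ((a * real n - 1) * ln 2) * exp (- real n * (4 * \<delta>)) / 4 = exp (b * real n) / 8"
      proof -
        have "exp ((a * real n - 1) * ln 2) * exp (- real n * (4 * \<delta>)) = exp (b * real n - ln 2)"
          unfolding exp_add[symmetric] b_def \<delta>_def by (rule arg_cong[where f=exp]) (simp add: algebra_simps)
        also have "\<dots> = exp (b * real n) / 2" by (simp add: exp_diff)
        finally have "exp ((a * real n - 1) * ln 2) * exp (- real n * (4 * \<delta>)) = exp (b * real n) / 2" .
        thus ?thesis by (simp only:)
      qed
      ultimately show ?thesis by linarith
    qed
    have T: "2 ^ m * 2 ^ n * 2 ^ n * (2 * exp (- (2 ^ l / 2 ^ r) * e^2 / 4)) \<le> exp (- 1 * real n)"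
    proof -
      have "(2::real) ^ m * 2 ^ n * 2 ^ n * 2 = 2 ^ (m + n + n + 1)" by (simp add: power_add)
      also have "\<dots> = exp (real (m + n + n + 1) * ln 2)"
        by (subst powr_realpow[symmetric]) (simp_all add: powr_def)
      also have "\<dots> = exp ((real m + 2 * real n + 1) * ln 2)" by (simp add: algebra_simps)
      also have "\<dots> \<le> exp ((R * real n + 2 * real n + 1) * ln 2)"
        using mb by simp
      finally have h1: "(2::real) ^ m * 2 ^ n * 2 ^ n * 2 \<le> exp ((R * real n + 2 * real n + 1) * ln 2)" .
      have h2: "exp (- (2 ^ l / 2 ^ r) * e^2 / 4) \<le> exp (- (exp (b * real n) / 8))"
        using mu by simp
      have "2 ^ m * 2 ^ n * 2 ^ n * (2 * exp (- (2 ^ l / 2 ^ r) * e^2 / 4))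
          = ((2::real) ^ m * 2 ^ n * 2 ^ n * 2) * exp (- (2 ^ l / 2 ^ r) * e^2 / 4)" by simp
      also have "\<dots> \<le> exp ((R * real n + 2 * real n + 1) * ln 2) * exp (- (exp (b * real n) / 8))"
        using h1 h2 by (intro mult_mono) auto
      also have "\<dots> = exp ((R * real n + 2 * real n + 1) * ln 2 - exp (b * real n) / 8)"
        by (simp only: diff_conv_add_uminus exp_add)
      also have "\<dots> \<le> exp (- 1 * real n)"
        using Nn unfolding K_def by (simp add: algebra_simps)
      finally show ?thesis .
    qed
    show "let l = nat \<lfloor>lam * real n\<rfloor>; m = nat \<lfloor>R * real n\<rfloor> - l; r = nat \<lfloor>rho * real n\<rfloor> in
      measure_pmf.prob (pmf_of_set (codes n m l))
        {C. Sem n m l r C \<le> exp (- real n * \<delta>)} \<ge> 1 - exp (- 1 * real n)"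
      unfolding Let_def l_def[symmetric] m_def[symmetric] r_def[symmetric] using main T by linarith
  qed
  show ?thesis
    by (rule exI[of _ \<delta>], rule conjI[OF d], rule exI[of _ "1::real"], rule conjI[OF zero_less_one], rule exI[of _ N]) (rule ALL)
qed


end
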